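(* Let $F$ be Thompson's group with the infinite presentation $\langle x_0,x_1,x_2,\ldots \mid x_i^{-1}x_nx_i=x_{n+1} \text{ for all } i<n\rangle$, and let $w\in F$. Let $\alpha$ be the unique normal form of $w$. Then $\alpha$ is a geodesic representative of $w$ with respect to the word metric on $F$ given by the infinite generating set $\{x_0,x_1,x_2,\ldots\}$; that is, no word in the letters $x_i^{\pm1}$ representing $w$ is shorter than $\alpha$.
   Context: Every element of $F$ can be written in normal form $x_{a_1}^{r_1}x_{a_2}^{r_2}\cdots x_{a_k}^{r_k}x_{b_l}^{-s_l}\cdots x_{b_2}^{-s_2}x_{b_1}^{-s_1}$ with all $r_i,s_i>0$, $0\le a_1<a_2<\cdots<a_k$ and $0\le b_1<b_2<\cdots<b_l$. This normal form is unique (the "unique normal form") if one additionally requires that whenever both $x_i$ and $x_i^{-1}$ occur, at least one of $x_{i+1}$ or $x_{i+1}^{-1}$ also occurs. The length of a word is the sum of the absolute values of its exponents. *)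

theory Defs
  imports Main
begin

text \<open>Letters x_i^{+1} are (i, True), letters x_i^{-1} are (i, False).
  Words are lists of letters; the length of a word is the sum of absolute values
  of its exponents, i.e. the list length.\<close>

type_synonym letter = "nat \<times> bool"
type_synonym word = "letter list"

definition inv_letter :: "letter \<Rightarrow> letter" where
  "inv_letter x = (fst x, \<not> snd x)"

inductive F_equiv :: "word \<Rightarrow> word \<Rightarrow> bool" where
  refl: "F_equiv u u"
| sym: "F_equiv u v \<Longrightarrow> F_equiv v u"
| trans: "F_equiv u v \<Longrightarrow> F_equiv v w \<Longrightarrow> F_equiv u w"
| cong: "F_equiv u v \<Longrightarrow> F_equiv (a @ u @ b) (a @ v @ b)"
| cancel: "F_equiv [x, inv_letter x] []"
| rel: "i < n \<Longrightarrow> F_equiv [(i, False), (n, True), (i, True)] [(Suc n, True)]"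

text \<open>The word x_{a_1}^{r_1} ... x_{a_k}^{r_k} x_{b_l}^{-s_l} ... x_{b_1}^{-s_1}
  given by ps = [(a_1,r_1),...,(a_k,r_k)] and ns = [(b_1,s_1),...,(b_l,s_l)].\<close>

definition nf_word :: "(nat \<times> nat) list \<Rightarrow> (nat \<times> nat) list \<Rightarrow> word" where
  "nf_word ps ns =
     concat (map (\<lambda>(a, r). replicate r (a, True)) ps) @
     concat (map (\<lambda>(b, s). replicate s (b, False)) (rev ns))"

definition unique_nf :: "(nat \<times> nat) list \<Rightarrow> (nat \<times> nat) list \<Rightarrow> bool" where
  "unique_nf ps ns \<longleftrightarrow>
     sorted_wrt (<) (map fst ps) \<and> sorted_wrt (<) (map fst ns) \<and>
     (\<forall>p \<in> set ps. 0 < snd p) \<and> (\<forall>p \<in> set ns. 0 < snd p) \<and>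
     (\<forall>i. i \<in> fst ` set ps \<and> i \<in> fst ` set ns \<longrightarrow>
          Suc i \<in> fst ` set ps \<or> Suc i \<in> fst ` set ns)"

end

theory Submission
  imports Defs
begin


type_synonym st = "(nat \<Rightarrow> nat) \<times> (nat \<Rightarrow> nat)"

definition Jx :: "nat \<Rightarrow> (nat \<Rightarrow> nat) \<Rightarrow> nat" where
  "Jx k N = (LEAST m. k + sum N {..<m} \<le> m)"

definition finz :: "(nat \<Rightarrow> nat) \<Rightarrow> bool" where
  "finz f \<longleftrightarrow> (\<exists>B. \<forall>i\<ge>B. f i = 0)"

definition insz :: "nat \<Rightarrow> (nat \<Rightarrow> nat) \<Rightarrow> nat \<Rightarrow> nat" where
  "insz j f = (\<lambda>i. if i \<le> j then f i else if i = Suc j then 0 else f (i - 1))"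

definition delz :: "nat \<Rightarrow> (nat \<Rightarrow> nat) \<Rightarrow> nat \<Rightarrow> nat" where
  "delz j f = (\<lambda>i. if i \<le> j then f i else f (Suc i))"

definition Rp :: "nat \<Rightarrow> st \<Rightarrow> st" where
  "Rp k g = (let P = fst g; N = snd g; j = Jx k N in
     if 0 < N j then (P, N(j := N j - 1))
     else ((insz j P)(j := Suc (P j)), insz j N))"

definition Rm :: "nat \<Rightarrow> st \<Rightarrow> st" where
  "Rm k g = (let P = fst g; N = snd g; j = Jx k N in
     if N j = 0 \<and> 0 < P j \<and> P (Suc j) = 0 \<and> N (Suc j) = 0
     then (delz j (P(j := P j - 1)), delz j N)
     else (P, N(j := Suc (N j))))"

definition uq :: "st \<Rightarrow> bool" where
  "uq g \<longleftrightarrow> (\<forall>i. 0 < fst g i \<and> 0 < snd g i \<longrightarrow> 0 < fst g (Suc i) \<or> 0 < snd g (Suc i))"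

definition vld :: "st \<Rightarrow> bool" where
  "vld g \<longleftrightarrow> finz (fst g) \<and> finz (snd g) \<and> uq g"

lemma sum_eq_below:
  fixes N :: "nat \<Rightarrow> nat" shows "(\<And>i. i < m \<Longrightarrow> N' i = N i) \<Longrightarrow> sum N' {..<m} = sum N {..<m}"
  by (rule sum.cong) auto

lemma Jx_eq:
  assumes "k + sum N {..<j} \<le> j" "\<And>m. m < j \<Longrightarrow> m < k + sum N {..<m}"
  shows "Jx k N = j"
  unfolding Jx_def
proof (rule Least_equality)
  show "k + sum N {..<j} \<le> j" by fact
  fix y assume "k + sum N {..<y} \<le> y"
  then show "j \<le> y" using assms(2) by (meson not_le)
qed

lemma sum_zero_beyond:
  fixes N :: "nat \<Rightarrow> nat"
  assumes "\<And>i. B \<le> i \<Longrightarrow> N i = 0" "B \<le> m"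
  shows "sum N {..<m} = sum N {..<B}"
  using assms(2) by (induction m) (auto simp: assms(1) le_Suc_eq)

lemma Jx_props:
  assumes "finz N"
  shows "k + sum N {..<Jx k N} = Jx k N" and "\<And>m. m < Jx k N \<Longrightarrow> m < k + sum N {..<m}"
proof -
  obtain B where B: "\<And>i. B \<le> i \<Longrightarrow> N i = 0" using assms finz_def by auto
  define m0 where "m0 = B + k + sum N {..<B}"
  have "k + sum N {..<m0} \<le> m0" using sum_zero_beyond[of B N m0] B m0_def by simp
  hence ex: "\<exists>m. k + sum N {..<m} \<le> m" by blast
  have le: "k + sum N {..<Jx k N} \<le> Jx k N" unfolding Jx_def by (rule LeastI_ex[OF ex])
  show lt: "\<And>m. m < Jx k N \<Longrightarrow> m < k + sum N {..<m}"
    unfolding Jx_def using not_less_Least by (metis not_le)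
  show "k + sum N {..<Jx k N} = Jx k N"
  proof (cases "Jx k N")
    case 0 then show ?thesis using le by simp
  next
    case (Suc m) then have "m < k + sum N {..<m}" using lt by simp
    then have "Jx k N \<le> k + sum N {..<Jx k N}" using Suc by simp
    then show ?thesis using le by simp
  qed
qed

lemma Jx_prev:
  assumes "finz N" "0 < Jx k N"
  shows "N (Jx k N - 1) = 0"
proof -
  obtain m where m: "Jx k N = Suc m" using assms(2) by (cases "Jx k N") auto
  have "m < k + sum N {..<m}" using Jx_props(2)[OF assms(1), of m k] m by simp
  moreover have "k + sum N {..<Suc m} = Suc m" using Jx_props(1)[OF assms(1), of k] m by simp
  ultimately show ?thesis using m by simp
qed

lemma Jx_same_below:
  assumes "finz N" "\<And>i. i < Jx k N \<Longrightarrow> N' i = N i"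
  shows "Jx k N' = Jx k N"
proof (rule Jx_eq)
  have "sum N' {..<Jx k N} = sum N {..<Jx k N}" by (rule sum_eq_below) (use assms in auto)
  then show "k + sum N' {..<Jx k N} \<le> Jx k N" using Jx_props(1)[OF assms(1), of k] by simp
  fix m assume m: "m < Jx k N"
  have "sum N' {..<m} = sum N {..<m}" by (rule sum_eq_below) (use assms m in auto)
  then show "m < k + sum N' {..<m}" using Jx_props(2)[OF assms(1) m] by simp
qed

lemma sum_upd_dec:
  fixes N :: "nat \<Rightarrow> nat"
  assumes "0 < N a" "a < m"
  shows "sum (N(a := N a - 1)) {..<m} + 1 = sum N {..<m}"
  using assms(2)
proof (induction m)
  case 0 then show ?case by simp
next
  case (Suc m)
  show ?case
  proof (cases "a = m")
    case True
    have "sum (N(a := N a - 1)) {..<a} = sum N {..<a}" by (rule sum_eq_below) auto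
    then show ?thesis using assms(1) True by simp
  next
    case False then show ?thesis using Suc by simp
  qed
qed

lemma sum_insz_low:
  "m \<le> Suc a \<Longrightarrow> sum (insz a N) {..<m} = sum N {..<m}"
  by (rule sum_eq_below) (auto simp: insz_def)

lemma sum_insz_high:
  assumes "a < m" shows "sum (insz a N) {..<Suc m} = sum N {..<m}"
  using assms
proof (induction m)
  case 0 then show ?case by simp
next
  case (Suc m)
  show ?case
  proof (cases "a = m")
    case True
    then show ?thesis using sum_insz_low[of "Suc a" a N] by (simp add: insz_def)
  next
    case False then show ?thesis using Suc by (simp add: insz_def)
  qed
qed


lemma comm:
  assumes fN: "finz N" and "i < n"
  shows "Rp i (Rp n (P, N)) = Rp (Suc n) (Rp i (P, N))"
proof -
  define a where "a = Jx i N"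
  define b where "b = Jx n N"
  have a1: "i + sum N {..<a} = a" using Jx_props(1)[OF fN] a_def by simp
  have a2: "\<And>m. m < a \<Longrightarrow> m < i + sum N {..<m}" using Jx_props(2)[OF fN] a_def by simp
  have b1: "n + sum N {..<b} = b" using Jx_props(1)[OF fN] b_def by simp
  have b2: "\<And>m. m < b \<Longrightarrow> m < n + sum N {..<m}" using Jx_props(2)[OF fN] b_def by simp
  have ab: "a < b"
  proof -
    have "\<not> b < a"
    proof
      assume "b < a"
      then have "b < i + sum N {..<b}" using a2 by simp
      then show False using b1 \<open>i < n\<close> by simp
    qed
    moreover have "a \<noteq> b" using a1 b1 \<open>i < n\<close> by auto
    ultimately show ?thesis by simp
  qed
  have Ja_b: "Jx i (N(b := x)) = a" for x
    unfolding a_def by (rule Jx_same_below[OF fN]) (use ab a_def in auto)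
  have Ja_ins: "Jx i (insz b N) = a"
    unfolding a_def by (rule Jx_same_below[OF fN]) (use ab a_def in \<open>auto simp: insz_def\<close>)
  have Jb_dec: "Jx (Suc n) (N(a := N a - 1)) = b" if Na: "0 < N a"
  proof (rule Jx_eq)
    have "sum (N(a := N a - 1)) {..<b} + 1 = sum N {..<b}" using sum_upd_dec[of N a b] Na ab by simp
    then show "Suc n + sum (N(a := N a - 1)) {..<b} \<le> b" using b1 by simp
    fix m assume m: "m < b"
    show "m < Suc n + sum (N(a := N a - 1)) {..<m}"
    proof (cases "m \<le> a")
      case True
      have "sum (N(a := N a - 1)) {..<m} = sum N {..<m}" by (rule sum_eq_below) (use True in auto)
      then show ?thesis using b2[OF m] by simp
    next
      case False
      have "sum (N(a := N a - 1)) {..<m} + 1 = sum N {..<m}" by (rule sum_upd_dec) (use Na False in auto)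
      then show ?thesis using b2[OF m] by simp
    qed
  qed
  have Jb_ins: "Jx (Suc n) (insz a N) = Suc b"
  proof (rule Jx_eq)
    show "Suc n + sum (insz a N) {..<Suc b} \<le> Suc b" using sum_insz_high[OF ab, of N] b1 by simp
    fix m assume m: "m < Suc b"
    show "m < Suc n + sum (insz a N) {..<m}"
    proof (cases "m \<le> Suc a")
      case True
      have "m \<le> n + sum N {..<m}"
      proof (cases "m < b")
        case True then show ?thesis using b2 by (simp add: less_imp_le)
      next
        case False then have "m = b" using m by simp
        then show ?thesis using b1 by simp
      qed
      then show ?thesis using sum_insz_low[OF True, of N] by simp
    next
      case False
      then obtain m' where m': "m = Suc m'" "a < m'" by (cases m) auto
      then have "m' < b" using m by simp
      then show ?thesis using sum_insz_high[OF m'(2), of N] b2 m' by simp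
    qed
  qed
  have Jb_dec': "Jx (Suc n) (N(a := N a - Suc 0)) = b" if "0 < N a" using Jb_dec[OF that] by simp
  have ins_upd: "insz b (N(a := x)) = (insz b N)(a := x)" for x
    using ab by (auto simp: insz_def intro!: ext)
  have ins_upd2: "insz a (N(b := x)) = (insz a N)(Suc b := x)" for x
    using ab by (auto simp: insz_def intro!: ext)
  have insb_a: "insz b N a = N a" using ab by (simp add: insz_def)
  have insa_b: "insz a N (Suc b) = N b" using ab by (simp add: insz_def)
  show ?thesis
  proof (cases "0 < N a")
    case Na: True
    show ?thesis
    proof (cases "0 < N b")
      case True
      then show ?thesis using Na ab
        by (simp add: Rp_def Let_def a_def[symmetric] b_def[symmetric] Ja_b Jb_dec' fun_upd_twist)
    next
      case False
      then show ?thesis using Na ab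
        by (simp add: Rp_def Let_def a_def[symmetric] b_def[symmetric] Ja_ins Jb_dec' ins_upd insb_a)
    qed
  next
    case Na: False
    show ?thesis
    proof (cases "0 < N b")
      case True
      then show ?thesis using Na ab
        by (simp add: Rp_def Let_def a_def[symmetric] b_def[symmetric] Ja_b Jb_ins ins_upd2 insa_b)
    next
      case False
      then show ?thesis using Na ab
      proof -
        have Nb: "N b = 0" "N a = 0" using False Na by auto
        have L: "Rp n (P, N) = ((insz b P)(b := Suc (P b)), insz b N)"
          using Nb by (simp add: Rp_def Let_def b_def[symmetric])
        have L2: "Rp i ((insz b P)(b := Suc (P b)), insz b N) =
           ((insz a ((insz b P)(b := Suc (P b))))(a := Suc (((insz b P)(b := Suc (P b))) a)), insz a (insz b N))"
          using Nb insb_a by (simp add: Rp_def Let_def Ja_ins)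
        have R: "Rp i (P, N) = ((insz a P)(a := Suc (P a)), insz a N)"
          using Nb by (simp add: Rp_def Let_def a_def[symmetric])
        have R2: "Rp (Suc n) ((insz a P)(a := Suc (P a)), insz a N) =
           ((insz (Suc b) ((insz a P)(a := Suc (P a))))(Suc b := Suc (((insz a P)(a := Suc (P a))) (Suc b))),
            insz (Suc b) (insz a N))"
          using Nb insa_b by (simp add: Rp_def Let_def Jb_ins)
        have e1: "(insz a ((insz b P)(b := Suc (P b))))(a := Suc (((insz b P)(b := Suc (P b))) a)) =
           (insz (Suc b) ((insz a P)(a := Suc (P a))))(Suc b := Suc (((insz a P)(a := Suc (P a))) (Suc b)))"
        proof (rule ext)
          fix x show "((insz a ((insz b P)(b := Suc (P b))))(a := Suc (((insz b P)(b := Suc (P b))) a))) x =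
           ((insz (Suc b) ((insz a P)(a := Suc (P a))))(Suc b := Suc (((insz a P)(a := Suc (P a))) (Suc b)))) x"
            using ab unfolding insz_def by (cases "x \<le> a"; cases "x = Suc a"; cases "x \<le> b"; cases "x = Suc b"; cases "x = Suc (Suc b)"; auto)
        qed
        have e2: "insz a (insz b N) = insz (Suc b) (insz a N)"
        proof (rule ext)
          fix x show "insz a (insz b N) x = insz (Suc b) (insz a N) x"
            using ab unfolding insz_def by (cases "x \<le> a"; cases "x = Suc a"; cases "x \<le> b"; cases "x = Suc b"; cases "x = Suc (Suc b)"; auto)
        qed
        show ?thesis using L L2 R R2 e1 e2 by simp
      qed
    qed
  qed
qed



lemma Rm_Rp:
  assumes v: "vld (P, N)"
  shows "Rm k (Rp k (P, N)) = (P, N)"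
proof -
  have fN: "finz N" and u: "uq (P, N)" using v by (auto simp: vld_def)
  define j where "j = Jx k N"
  show ?thesis
  proof (cases "0 < N j")
    case True
    have J: "Jx k (N(j := x)) = j" for x
      unfolding j_def by (rule Jx_same_below[OF fN]) (auto simp: j_def)
    have "\<not> (0 < P j \<and> P (Suc j) = 0 \<and> N (Suc j) = 0)" using u True by (auto simp: uq_def)
    then show ?thesis using True
      by (auto simp add: Rp_def Rm_def Let_def j_def[symmetric] J)
  next
    case False
    have J: "Jx k (insz j N) = j"
      unfolding j_def by (rule Jx_same_below[OF fN]) (auto simp: j_def insz_def)
    have R1: "Rp k (P, N) = ((insz j P)(j := Suc (P j)), insz j N)"
      using False by (simp add: Rp_def Let_def j_def[symmetric])
    have e1: "delz j ((insz j P)(j := P j)) = P"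
      by (rule ext) (auto simp: delz_def insz_def)
    have e2: "delz j (insz j N) = N"
      by (rule ext) (auto simp: delz_def insz_def)
    have i1: "insz j N (Suc j) = 0" "insz j P (Suc j) = 0" "insz j N j = N j"
      by (auto simp: insz_def)
    show ?thesis using False unfolding R1
      by (simp add: Rm_def Let_def J e1 e2 i1)
  qed
qed


lemma Rp_Rm:
  assumes fN: "finz N"
  shows "Rp k (Rm k (P, N)) = (P, N)"
proof -
  define j where "j = Jx k N"
  show ?thesis
  proof (cases "N j = 0 \<and> 0 < P j \<and> P (Suc j) = 0 \<and> N (Suc j) = 0")
    case True
    have J: "Jx k (delz j N) = j"
      unfolding j_def by (rule Jx_same_below[OF fN]) (auto simp: j_def delz_def)
    have R1: "Rm k (P, N) = (delz j (P(j := P j - 1)), delz j N)"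
      using True by (simp add: Rm_def Let_def j_def[symmetric])
    have d: "delz j N j = 0" "delz j (P(j := P j - 1)) j = P j - 1" using True by (auto simp: delz_def)
    have e1: "(insz j (delz j (P(j := P j - 1))))(j := Suc (P j - 1)) = P"
      using True by (auto simp: delz_def insz_def intro!: ext)
    have e2: "insz j (delz j N) = N"
      using True by (auto simp: delz_def insz_def intro!: ext)
    show ?thesis unfolding R1
      by (simp only: Rp_def Let_def fst_conv snd_conv J d e1 e2) simp
  next
    case False
    have J: "Jx k (N(j := x)) = j" for x
      unfolding j_def by (rule Jx_same_below[OF fN]) (auto simp: j_def)
    have R1: "Rm k (P, N) = (P, N(j := Suc (N j)))"
      using False by (auto simp add: Rm_def Let_def j_def[symmetric])
    show ?thesis unfolding R1 by (simp add: Rp_def Let_def J)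
  qed
qed

lemma finz_insz: "finz f \<Longrightarrow> finz (insz j f)"
  unfolding finz_def insz_def
  by (metis Suc_le_D le_SucI le_Suc_eq diff_Suc_1 not_less_eq_eq)

lemma finz_delz: "finz f \<Longrightarrow> finz (delz j f)"
  unfolding finz_def delz_def by (metis le_SucI)

lemma finz_upd: "finz f \<Longrightarrow> finz (f(j := x))"
  unfolding finz_def by (metis (full_types) fun_upd_apply le_SucI max.cobounded1 max.cobounded2 not_less_eq_eq order_trans)

lemma vld_Rp:
  assumes v: "vld (P, N)" shows "vld (Rp k (P, N))"
proof -
  have fP: "finz P" and fN: "finz N" and u: "uq (P, N)" using v by (auto simp: vld_def)
  define j where "j = Jx k N"
  have prev: "N (j - 1) = 0" if "0 < j" using Jx_prev[OF fN] that j_def by simp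
  show ?thesis
  proof (cases "0 < N j")
    case True
    have R1: "Rp k (P, N) = (P, N(j := N j - 1))"
      using True by (simp add: Rp_def Let_def j_def[symmetric])
    have "uq (P, N(j := N j - 1))"
      unfolding uq_def
    proof (intro allI impI)
      fix i assume h: "0 < fst (P, N(j := N j - 1)) i \<and> 0 < snd (P, N(j := N j - 1)) i"
      show "0 < fst (P, N(j := N j - 1)) (Suc i) \<or> 0 < snd (P, N(j := N j - 1)) (Suc i)"
      proof (cases "Suc i = j")
        case True then show ?thesis using h prev by auto
      next
        case False
        then show ?thesis using h u by (auto simp: uq_def split: if_splits)
      qed
    qed
    then show ?thesis unfolding R1 using fP fN finz_upd by (simp add: vld_def)
  next
    case False
    have R1: "Rp k (P, N) = ((insz j P)(j := Suc (P j)), insz j N)"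
      using False by (simp add: Rp_def Let_def j_def[symmetric])
    have "uq ((insz j P)(j := Suc (P j)), insz j N)"
      unfolding uq_def
    proof (intro allI impI)
      fix i assume h: "0 < fst ((insz j P)(j := Suc (P j)), insz j N) i \<and> 0 < snd ((insz j P)(j := Suc (P j)), insz j N) i"
      have ui: "0 < P i' \<and> 0 < N i' \<Longrightarrow> 0 < P (Suc i') \<or> 0 < N (Suc i')" for i' using u by (auto simp: uq_def)
      show "0 < fst ((insz j P)(j := Suc (P j)), insz j N) (Suc i) \<or> 0 < snd ((insz j P)(j := Suc (P j)), insz j N) (Suc i)"
      proof -
        consider "Suc i < j" | "Suc i = j" | "i = j" | "i = Suc j" | "Suc j < i" by linarith
        then show ?thesis
        proof cases
          case 1 then show ?thesis using h ui[of i] by (auto simp: insz_def)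
        next
          case 2 then show ?thesis by (auto simp: insz_def)
        next
          case 3 then show ?thesis using h False by (auto simp: insz_def)
        next
          case 4 then show ?thesis using h by (auto simp: insz_def)
        next
          case 5
          then obtain i' where i': "i = Suc i'" "j < i'" by (cases i) auto
          then show ?thesis using h ui[of i'] by (auto simp: insz_def)
        qed
      qed
    qed
    then show ?thesis unfolding R1 using fP fN finz_upd finz_insz by (simp add: vld_def)
  qed
qed

lemma vld_Rm:
  assumes v: "vld (P, N)" shows "vld (Rm k (P, N))"
proof -
  have fP: "finz P" and fN: "finz N" and u: "uq (P, N)" using v by (auto simp: vld_def)
  have ui: "0 < P i' \<and> 0 < N i' \<Longrightarrow> 0 < P (Suc i') \<or> 0 < N (Suc i')" for i' using u by (auto simp: uq_def)
  define j where "j = Jx k N"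
  have prev: "N (j - 1) = 0" if "0 < j" using Jx_prev[OF fN] that j_def by simp
  show ?thesis
  proof (cases "N j = 0 \<and> 0 < P j \<and> P (Suc j) = 0 \<and> N (Suc j) = 0")
    case True
    have R1: "Rm k (P, N) = (delz j (P(j := P j - 1)), delz j N)"
      using True by (simp add: Rm_def Let_def j_def[symmetric])
    have "uq (delz j (P(j := P j - 1)), delz j N)"
      unfolding uq_def
    proof (intro allI impI)
      fix i assume h: "0 < fst (delz j (P(j := P j - 1)), delz j N) i \<and> 0 < snd (delz j (P(j := P j - 1)), delz j N) i"
      show "0 < fst (delz j (P(j := P j - 1)), delz j N) (Suc i) \<or> 0 < snd (delz j (P(j := P j - 1)), delz j N) (Suc i)"
      proof -
        consider "Suc i < j" | "Suc i = j" | "i = j" | "j < i" by linarith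
        then show ?thesis
        proof cases
          case 1 then show ?thesis using h ui[of i] by (auto simp: delz_def)
        next
          case 2 then show ?thesis using h prev by (auto simp: delz_def)
        next
          case 3 then show ?thesis using h True by (auto simp: delz_def)
        next
          case 4 then show ?thesis using h ui[of "Suc i"] by (auto simp: delz_def)
        qed
      qed
    qed
    then show ?thesis unfolding R1 using fP fN finz_upd finz_delz by (simp add: vld_def)
  next
    case False
    have R1: "Rm k (P, N) = (P, N(j := Suc (N j)))"
      using False by (auto simp add: Rm_def Let_def j_def[symmetric])
    have "uq (P, N(j := Suc (N j)))"
      unfolding uq_def
    proof (intro allI impI)
      fix i assume h: "0 < fst (P, N(j := Suc (N j))) i \<and> 0 < snd (P, N(j := Suc (N j))) i"
      show "0 < fst (P, N(j := Suc (N j))) (Suc i) \<or> 0 < snd (P, N(j := Suc (N j))) (Suc i)"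
      proof (cases "i = j")
        case True then show ?thesis using h ui[of i] False by auto
      next
        case False2: False
        then show ?thesis using h ui[of i] by auto
      qed
    qed
    then show ?thesis unfolding R1 using fP fN finz_upd by (simp add: vld_def)
  qed
qed



fun stp :: "st \<Rightarrow> letter \<Rightarrow> st" where
  "stp g (k, b) = (if b then Rp k g else Rm k g)"

definition act :: "st \<Rightarrow> word \<Rightarrow> st" where
  "act g w = foldl stp g w"

lemma act_Nil[simp]: "act g [] = g" by (simp add: act_def)
lemma act_Cons[simp]: "act g (x # w) = act (stp g x) w" by (simp add: act_def)
lemma act_append[simp]: "act g (u @ w) = act (act g u) w" by (simp add: act_def)

lemma vld_stp: "vld g \<Longrightarrow> vld (stp g x)"
  by (cases g; cases x) (auto simp: vld_Rp vld_Rm)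

lemma vld_act: "vld g \<Longrightarrow> vld (act g w)"
  by (induction w arbitrary: g) (auto simp: vld_stp)

lemma F_inv: "F_equiv u v \<Longrightarrow> (\<forall>g. vld g \<longrightarrow> act g u = act g v)"
proof (induction rule: F_equiv.induct)
  case (cong u v a b)
  show ?case
  proof (intro allI impI)
    fix g :: st assume "vld g"
    then have "vld (act g a)" by (rule vld_act)
    then have e: "act (act g a) u = act (act g a) v" using cong.IH by blast
    then show "act g (a @ u @ b) = act g (a @ v @ b)" by simp
  qed
next
  case (cancel x)
  show ?case
  proof (intro allI impI)
    fix g :: st assume v: "vld g"
    obtain P N where g: "g = (P, N)" by (cases g)
    obtain k b where x: "x = (k, b)" by (cases x)
    have fN: "finz N" using v g by (simp add: vld_def)
    show "act g [x, inv_letter x] = act g []"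
      using v g x Rm_Rp Rp_Rm[OF fN] by (cases b) (auto simp: inv_letter_def)
  qed
next
  case (rel i n)
  show ?case
  proof (intro allI impI)
    fix g :: st assume v: "vld g"
    obtain P N where g: "g = (P, N)" by (cases g)
    have fN: "finz N" using v g by (simp add: vld_def)
    obtain P' N' where h: "Rm i g = (P', N')" by (cases "Rm i g")
    have vh: "vld (P', N')" using vld_Rm v g h by metis
    have fN': "finz N'" using vh by (simp add: vld_def)
    have gh: "g = Rp i (P', N')" using Rp_Rm[OF fN, of i P] g h by simp
    have "act g [(i, False), (n, True), (i, True)] = Rp i (Rp n (P', N'))" using h by simp
    also have "\<dots> = Rp (Suc n) (Rp i (P', N'))" by (rule comm[OF fN' rel])
    also have "\<dots> = act g [(Suc n, True)]" using gh by simp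
    finally show "act g [(i, False), (n, True), (i, True)] = act g [(Suc n, True)]" .
  qed
qed auto

definition bnd :: "nat \<Rightarrow> st \<Rightarrow> bool" where
  "bnd B g \<longleftrightarrow> (\<forall>i\<ge>B. fst g i = 0 \<and> snd g i = 0)"

definition szz :: "nat \<Rightarrow> st \<Rightarrow> nat" where
  "szz B g = sum (fst g) {..<B} + sum (snd g) {..<B}"

lemma szz_mono:
  assumes "bnd B g" "B \<le> B'" shows "szz B' g = szz B g"
  using assms sum_zero_beyond[of B "fst g" B'] sum_zero_beyond[of B "snd g" B']
  by (auto simp: bnd_def szz_def)

lemma bnd_mono: "bnd B g \<Longrightarrow> B \<le> B' \<Longrightarrow> bnd B' g"
  by (auto simp: bnd_def)

lemma sum_upd_inc:
  fixes f :: "nat \<Rightarrow> nat"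
  assumes "j < m" shows "sum (f(j := Suc (f j))) {..<m} = sum f {..<m} + 1"
  using sum_upd_dec[of "f(j := Suc (f j))" j m] assms by simp

lemma sum_upd_le:
  fixes f :: "nat \<Rightarrow> nat"
  assumes "x \<le> f j" shows "sum (f(j := x)) A \<le> sum f A"
  by (rule sum_mono) (use assms in auto)

lemma sum_delz:
  fixes f :: "nat \<Rightarrow> nat"
  assumes "f (Suc j) = 0" "j < m" shows "sum (delz j f) {..<m} = sum f {..<Suc m}"
proof -
  have "insz j (delz j f) = f" using assms(1) by (auto simp: insz_def delz_def intro!: ext)
  then show ?thesis using sum_insz_high[OF assms(2), of "delz j f"] by simp
qed

lemma sz_step:
  assumes v: "vld g" and b: "bnd B g"
  shows "\<exists>B'. bnd B' (stp g x) \<and> szz B' (stp g x) \<le> szz B g + 1"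
proof -
  obtain P N where g: "g = (P, N)" by (cases g)
  obtain k c where x: "x = (k, c)" by (cases x)
  define j where "j = Jx k N"
  define B1 where "B1 = max B (j + 2)"
  have BB1: "B \<le> B1" and jB: "Suc j < B1" unfolding B1_def by auto
  have b1: "bnd B1 g" by (rule bnd_mono[OF b BB1])
  have s1: "szz B1 g = szz B g" by (rule szz_mono[OF b BB1])
  have zP: "\<And>i. B1 \<le> i \<Longrightarrow> P i = 0" and zN: "\<And>i. B1 \<le> i \<Longrightarrow> N i = 0"
    using b1 g by (auto simp: bnd_def)
  have sP: "sum P {..<Suc B1} = sum P {..<B1}" using zP by simp
  have sN: "sum N {..<Suc B1} = sum N {..<B1}" using zN by simp
  show ?thesis
  proof (cases c)
    case True
    then have sx: "stp g x = Rp k (P, N)" using g x by simp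
    show ?thesis
    proof (cases "0 < N j")
      case Nj: True
      have R: "Rp k (P, N) = (P, N(j := N j - 1))"
        using Nj by (simp add: Rp_def Let_def j_def[symmetric])
      have "bnd B1 (P, N(j := N j - 1))" using zP zN jB by (auto simp: bnd_def)
      moreover have "sum (N(j := N j - 1)) {..<B1} + 1 = sum N {..<B1}"
        by (rule sum_upd_dec) (use Nj jB in auto)
      ultimately show ?thesis using s1 g sx R by (intro exI[of _ B1]) (auto simp: szz_def)
    next
      case Nj: False
      have R: "Rp k (P, N) = ((insz j P)(j := Suc (P j)), insz j N)"
        using Nj by (simp add: Rp_def Let_def j_def[symmetric])
      have "bnd (Suc B1) ((insz j P)(j := Suc (P j)), insz j N)"
        using zP zN jB by (auto simp: bnd_def insz_def)
      moreover have "sum ((insz j P)(j := Suc (P j))) {..<Suc B1} = sum P {..<B1} + 1"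
      proof -
        have "insz j P j = P j" by (simp add: insz_def)
        then have "sum ((insz j P)(j := Suc (P j))) {..<Suc B1} = sum (insz j P) {..<Suc B1} + 1"
          using sum_upd_inc[of j "Suc B1" "insz j P"] jB by simp
        then show ?thesis using sum_insz_high[of j B1 P] jB by simp
      qed
      moreover have "sum (insz j N) {..<Suc B1} = sum N {..<B1}"
        using sum_insz_high[of j B1 N] jB by simp
      ultimately show ?thesis using s1 g sx R by (intro exI[of _ "Suc B1"]) (auto simp: szz_def)
    qed
  next
    case False
    then have sx: "stp g x = Rm k (P, N)" using g x by simp
    show ?thesis
    proof (cases "N j = 0 \<and> 0 < P j \<and> P (Suc j) = 0 \<and> N (Suc j) = 0")
      case C: True
      have R: "Rm k (P, N) = (delz j (P(j := P j - 1)), delz j N)"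
        using C by (simp add: Rm_def Let_def j_def[symmetric])
      have "bnd B1 (delz j (P(j := P j - 1)), delz j N)"
        using zP zN jB by (auto simp: bnd_def delz_def)
      moreover have "sum (delz j (P(j := P j - 1))) {..<B1} \<le> sum P {..<B1}"
      proof -
        have "sum (delz j (P(j := P j - 1))) {..<B1} = sum (P(j := P j - 1)) {..<Suc B1}"
          by (rule sum_delz) (use C jB in auto)
        also have "\<dots> \<le> sum P {..<Suc B1}" by (rule sum_upd_le) simp
        finally show ?thesis using sP by simp
      qed
      moreover have "sum (delz j N) {..<B1} = sum N {..<B1}"
        using sum_delz[of N j B1] C jB sN by simp
      ultimately show ?thesis using s1 g sx R by (intro exI[of _ B1]) (auto simp: szz_def)
    next
      case C: False
      have R: "Rm k (P, N) = (P, N(j := Suc (N j)))"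
        using C by (auto simp add: Rm_def Let_def j_def[symmetric])
      have "bnd B1 (P, N(j := Suc (N j)))" using zP zN jB by (auto simp: bnd_def)
      moreover have "sum (N(j := Suc (N j))) {..<B1} = sum N {..<B1} + 1"
        by (rule sum_upd_inc) (use jB in auto)
      ultimately show ?thesis using s1 g sx R by (intro exI[of _ B1]) (auto simp: szz_def)
    qed
  qed
qed

lemma sz_act:
  "vld g \<Longrightarrow> bnd B g \<Longrightarrow> \<exists>B'. bnd B' (act g w) \<and> szz B' (act g w) \<le> szz B g + length w"
proof (induction w arbitrary: g B)
  case Nil then show ?case by auto
next
  case (Cons x w)
  obtain B1 where B1: "bnd B1 (stp g x)" "szz B1 (stp g x) \<le> szz B g + 1"
    using sz_step[OF Cons.prems] by blast
  obtain B2 where "bnd B2 (act (stp g x) w)" "szz B2 (act (stp g x) w) \<le> szz B1 (stp g x) + length w"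
    using Cons.IH[OF vld_stp[OF Cons.prems(1)] B1(1)] by blast
  then show ?case using B1 by (intro exI[of _ B2]) auto
qed



definition Pf :: "(nat \<times> nat) list \<Rightarrow> nat \<Rightarrow> nat" where
  "Pf xs i = sum_list (map (\<lambda>p. if fst p = i then snd p else 0) xs)"

lemma Pf_Nil[simp]: "Pf [] i = 0" by (simp add: Pf_def)
lemma Pf_Cons[simp]: "Pf (p # xs) i = (if fst p = i then snd p else 0) + Pf xs i"
  by (simp add: Pf_def)

lemma Pf_nz: "Pf xs i \<noteq> 0 \<Longrightarrow> i \<in> fst ` set xs"
  by (induction xs) (auto split: if_splits)

lemma Pf_pos: "\<forall>p\<in>set xs. 0 < snd p \<Longrightarrow> i \<in> fst ` set xs \<Longrightarrow> 0 < Pf xs i"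
  by (induction xs) auto

lemma sum_Pf: "\<forall>p\<in>set xs. fst p < B \<Longrightarrow> sum (Pf xs) {..<B} = sum_list (map snd xs)"
proof (induction xs)
  case Nil then show ?case by simp
next
  case (Cons p xs)
  have "sum (Pf (p # xs)) {..<B} = sum (\<lambda>i. if fst p = i then snd p else 0) {..<B} + sum (Pf xs) {..<B}"
    by (simp add: sum.distrib)
  also have "sum (\<lambda>i. if fst p = i then snd p else 0) {..<B} = snd p"
    using Cons.prems by (simp add: sum.delta)
  finally show ?case using Cons by simp
qed

abbreviation Z :: "nat \<Rightarrow> nat" where "Z \<equiv> (\<lambda>_. 0)"

lemma Jx_zero_below:
  assumes "\<And>i. i < b \<Longrightarrow> N i = 0" shows "Jx b N = b"
proof (rule Jx_eq)
  have s: "sum N {..<m} = 0" if "m \<le> b" for m using assms that by simp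
  show "b + sum N {..<b} \<le> b" using s[of b] by simp
  fix m assume "m < b" then show "m < b + sum N {..<m}" by linarith
qed

lemma act_pos_block:
  "(\<forall>i. a < i \<longrightarrow> P i = 0) \<Longrightarrow> act (P, Z) (replicate r (a, True)) = (P(a := P a + r), Z)"
proof (induction r arbitrary: P)
  case 0 then show ?case by simp
next
  case (Suc r)
  have J: "Jx a Z = a" by (rule Jx_zero_below) simp
  have iP: "insz a P = P" using Suc.prems by (auto simp: insz_def intro!: ext)
  have iZ: "insz a Z = Z" by (auto simp: insz_def intro!: ext)
  have st: "stp (P, Z) (a, True) = (P(a := Suc (P a)), Z)"
    by (simp add: Rp_def Let_def J iP iZ)
  have pre: "\<forall>i. a < i \<longrightarrow> (P(a := Suc (P a))) i = 0" using Suc.prems by simp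
  have "act (P(a := Suc (P a)), Z) (replicate r (a, True)) = ((P(a := Suc (P a)))(a := (P(a := Suc (P a))) a + r), Z)"
    by (rule Suc.IH[OF pre])
  then show ?case using st by (simp only: replicate_Suc act_Cons fun_upd_same fun_upd_upd add_Suc add_Suc_right)
qed

lemma act_pos:
  "sorted_wrt (<) (map fst ps) \<Longrightarrow> (\<forall>i. P i \<noteq> 0 \<longrightarrow> (\<forall>p\<in>set ps. i \<le> fst p)) \<Longrightarrow>
   act (P, Z) (concat (map (\<lambda>(a, r). replicate r (a, True)) ps)) = (\<lambda>i. P i + Pf ps i, Z)"
proof (induction ps arbitrary: P)
  case Nil then show ?case by simp
next
  case (Cons p ps)
  obtain a r where p: "p = (a, r)" by (cases p)
  have blk: "act (P, Z) (replicate r (a, True)) = (P(a := P a + r), Z)"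
    by (rule act_pos_block) (use Cons.prems p in \<open>fastforce\<close>)
  have IH: "act (P(a := P a + r), Z) (concat (map (\<lambda>(a, r). replicate r (a, True)) ps))
      = (\<lambda>i. (P(a := P a + r)) i + Pf ps i, Z)"
  proof (rule Cons.IH)
    show "sorted_wrt (<) (map fst ps)" using Cons.prems by simp
    show "\<forall>i. (P(a := P a + r)) i \<noteq> 0 \<longrightarrow> (\<forall>p\<in>set ps. i \<le> fst p)"
      using Cons.prems p by (auto simp: less_imp_le)
  qed
  show ?case using blk IH p by (auto intro!: ext)
qed

lemma act_neg_block:
  "(\<forall>i. N i \<noteq> 0 \<longrightarrow> b \<le> i) \<Longrightarrow> (0 < N b \<or> \<not> (0 < P b \<and> P (Suc b) = 0 \<and> N (Suc b) = 0)) \<Longrightarrow>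
   act (P, N) (replicate s (b, False)) = (P, N(b := N b + s))"
proof (induction s arbitrary: N)
  case 0 then show ?case by simp
next
  case (Suc s)
  have J: "Jx b N = b" by (rule Jx_zero_below) (use Suc.prems(1) in \<open>force\<close>)
  have st: "stp (P, N) (b, False) = (P, N(b := Suc (N b)))"
    using Suc.prems(2) by (auto simp: Rm_def Let_def J)
  have pre: "\<forall>i. (N(b := Suc (N b))) i \<noteq> 0 \<longrightarrow> b \<le> i" using Suc.prems(1) by simp
  have "act (P, N(b := Suc (N b))) (replicate s (b, False)) = (P, (N(b := Suc (N b)))(b := (N(b := Suc (N b))) b + s))"
    by (rule Suc.IH[OF pre]) simp
  then show ?case using st by (simp only: replicate_Suc act_Cons fun_upd_same fun_upd_upd add_Suc add_Suc_right)
qed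

lemma act_neg:
  "sorted_wrt (<) (map fst ns) \<Longrightarrow> \<forall>p\<in>set ns. 0 < snd p \<Longrightarrow>
   (\<forall>i\<in>fst ` set ns. 0 < P i \<longrightarrow> 0 < P (Suc i) \<or> Suc i \<in> fst ` set ns) \<Longrightarrow>
   act (P, Z) (concat (map (\<lambda>(b, s). replicate s (b, False)) (rev ns))) = (P, Pf ns)"
proof (induction ns)
  case Nil then show ?case by (simp add: fun_eq_iff)
next
  case (Cons p ns)
  obtain b s where p: "p = (b, s)" by (cases p)
  have gt: "\<forall>q\<in>set ns. b < fst q" using Cons.prems(1) p by simp
  have IH: "act (P, Z) (concat (map (\<lambda>(b, s). replicate s (b, False)) (rev ns))) = (P, Pf ns)"
  proof (rule Cons.IH)
    show "sorted_wrt (<) (map fst ns)" using Cons.prems by simp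
    show "\<forall>p\<in>set ns. 0 < snd p" using Cons.prems by simp
    show "\<forall>i\<in>fst ` set ns. 0 < P i \<longrightarrow> 0 < P (Suc i) \<or> Suc i \<in> fst ` set ns"
    proof (intro ballI impI)
      fix i assume i: "i \<in> fst ` set ns" "0 < P i"
      then have "0 < P (Suc i) \<or> Suc i \<in> fst ` set (p # ns)" using Cons.prems(3) by auto
      moreover have "Suc i \<noteq> b" using i gt by auto
      ultimately show "0 < P (Suc i) \<or> Suc i \<in> fst ` set ns" using p by auto
    qed
  qed
  have blk: "act (P, Pf ns) (replicate s (b, False)) = (P, (Pf ns)(b := Pf ns b + s))"
  proof (rule act_neg_block)
    show "\<forall>i. Pf ns i \<noteq> 0 \<longrightarrow> b \<le> i" using Pf_nz gt by (auto intro: less_imp_le)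
    show "0 < Pf ns b \<or> \<not> (0 < P b \<and> P (Suc b) = 0 \<and> Pf ns (Suc b) = 0)"
    proof (cases "0 < P b")
      case True
      then have "0 < P (Suc b) \<or> Suc b \<in> fst ` set (p # ns)" using Cons.prems(3) p by auto
      then have "0 < P (Suc b) \<or> Suc b \<in> fst ` set ns" using p by auto
      have pns: "\<forall>p\<in>set ns. 0 < snd p" using Cons.prems(2) by simp
      show ?thesis using \<open>0 < P (Suc b) \<or> Suc b \<in> fst ` set ns\<close>
      proof
        assume "0 < P (Suc b)" then show ?thesis by simp
      next
        assume "Suc b \<in> fst ` set ns" then have "0 < Pf ns (Suc b)" using Pf_pos[OF pns] by blast
        then show ?thesis by simp
      qed
    qed simp
  qed
  show ?case using IH blk p by (auto intro!: ext)
qed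

lemma len_pos: "length (concat (map (\<lambda>(a, r). replicate r (a, c)) ps)) = sum_list (map snd ps)"
  by (induction ps) auto

theorem lemma2p1:
  fixes ps ns :: "(nat \<times> nat) list" and v :: word
  assumes "unique_nf ps ns"
    and "F_equiv (nf_word ps ns) v"
  shows "length (nf_word ps ns) \<le> length v"
proof -
  have sp: "sorted_wrt (<) (map fst ps)" and sn: "sorted_wrt (<) (map fst ns)"
    and pp: "\<forall>p\<in>set ps. 0 < snd p" and pn: "\<forall>p\<in>set ns. 0 < snd p"
    and un: "\<forall>i. i \<in> fst ` set ps \<and> i \<in> fst ` set ns \<longrightarrow> Suc i \<in> fst ` set ps \<or> Suc i \<in> fst ` set ns"
    using assms(1) unfolding unique_nf_def by auto
  define e :: st where "e = (Z, Z)"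
  have ve: "vld e" by (auto simp: e_def vld_def finz_def uq_def)
  have a1: "act e (concat (map (\<lambda>(a, r). replicate r (a, True)) ps)) = (Pf ps, Z)"
    using act_pos[OF sp, of Z] by (simp add: e_def)
  have a2: "act (Pf ps, Z) (concat (map (\<lambda>(b, s). replicate s (b, False)) (rev ns))) = (Pf ps, Pf ns)"
  proof (rule act_neg[OF sn pn])
    show "\<forall>i\<in>fst ` set ns. 0 < Pf ps i \<longrightarrow> 0 < Pf ps (Suc i) \<or> Suc i \<in> fst ` set ns"
    proof (intro ballI impI)
      fix i assume i: "i \<in> fst ` set ns" "0 < Pf ps i"
      then have "i \<in> fst ` set ps" using Pf_nz by auto
      then have "Suc i \<in> fst ` set ps \<or> Suc i \<in> fst ` set ns" using un i by blast
      then show "0 < Pf ps (Suc i) \<or> Suc i \<in> fst ` set ns" using Pf_pos[OF pp] by auto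
    qed
  qed
  have anf: "act e (nf_word ps ns) = (Pf ps, Pf ns)"
    using a1 a2 by (simp add: nf_word_def)
  have av: "act e v = (Pf ps, Pf ns)" using F_inv[OF assms(2)] ve anf by metis
  obtain B where B: "bnd B (act e v)" "szz B (act e v) \<le> szz 0 e + length v"
    using sz_act[OF ve, of 0 v] by (auto simp: e_def bnd_def)
  define B2 where "B2 = Suc (B + sum_list (map fst ps) + sum_list (map fst ns))"
  have lt: "\<forall>p\<in>set xs. fst p < B2" if "sum_list (map fst xs) < B2" for xs
    using that member_le_sum_list[of _ "map fst xs"] by fastforce
  have lp: "\<forall>p\<in>set ps. fst p < B2" by (rule lt) (simp add: B2_def)
  have ln: "\<forall>p\<in>set ns. fst p < B2" by (rule lt) (simp add: B2_def)
  have "szz B2 (Pf ps, Pf ns) = sum_list (map snd ps) + sum_list (map snd ns)"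
    using sum_Pf[OF lp] sum_Pf[OF ln] by (simp add: szz_def)
  also have "\<dots> = length (nf_word ps ns)"
    by (simp add: nf_word_def len_pos sum_list_rev rev_map[symmetric])
  finally have s2: "szz B2 (Pf ps, Pf ns) = length (nf_word ps ns)" .
  have "szz B2 (Pf ps, Pf ns) = szz B (Pf ps, Pf ns)"
    using szz_mono[of B "(Pf ps, Pf ns)" B2] B av by (simp add: B2_def)
  moreover have "szz 0 e = 0" by (simp add: szz_def)
  ultimately show ?thesis using s2 B av by simp
qed

end
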